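(* Let $X_n$ and $Y_n$ be the number of centered arcs and the number of pairs of coupled arcs, respectively, of a uniformly random perfect matching of $[2n]$. Then for all $k,\ell\ge0$, $$\lim_{n\to\infty}\Pr(X_n=k)=\frac{e^{-1/2}}{2^kk!},\qquad \lim_{n\to\infty}\Pr(Y_n=\ell)=\frac{e^{-1/4}}{4^\ell\ell!},$$ i.e. $X_n$ and $Y_n$ converge to Poisson laws with parameters $1/2$ and $1/4$, and moreover $$\lim_{n\to\infty}\Pr(X_n=k,Y_n=\ell)=\frac{e^{-3/4}}{2^k4^\ell k!\ell!}.$$
   Context: $[2n]=\{1,\dots,2n\}$. For $A\subseteq[2n]$ let $\overline{A}=\{2n+1-i: i\in A\}$. An arc $\{i,j\}$ of a perfect matching $M$ of $[2n]$ is centered if $\overline{\{i,j\}}=\{i,j\}$; coupled if it is not centered but $\overline{\{i,j\}}\in M$, in which case $\{i,j\}$ and $\overline{\{i,j\}}$ form a pair of coupled arcs. *)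

theory Defs
  imports "HOL-Analysis.Analysis"
begin

definition perfect_matchings :: "nat \<Rightarrow> nat set set set" where
  "perfect_matchings n =
     {M. (\<forall>a\<in>M. card a = 2) \<and> \<Union>M = {1..2*n} \<and>
         (\<forall>a\<in>M. \<forall>b\<in>M. a \<noteq> b \<longrightarrow> a \<inter> b = {})}"

definition refl_set :: "nat \<Rightarrow> nat set \<Rightarrow> nat set" where
  "refl_set n A = (\<lambda>i. 2*n + 1 - i) ` A"

definition centered_arcs :: "nat \<Rightarrow> nat set set \<Rightarrow> nat set set" where
  "centered_arcs n M = {a \<in> M. refl_set n a = a}"

definition coupled_arcs :: "nat \<Rightarrow> nat set set \<Rightarrow> nat set set" where
  "coupled_arcs n M = {a \<in> M. refl_set n a \<noteq> a \<and> refl_set n a \<in> M}"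

definition num_centered :: "nat \<Rightarrow> nat set set \<Rightarrow> nat" where
  "num_centered n M = card (centered_arcs n M)"

definition num_coupled_pairs :: "nat \<Rightarrow> nat set set \<Rightarrow> nat" where
  "num_coupled_pairs n M = card {{a, refl_set n a} | a. a \<in> coupled_arcs n M}"

definition pm_prob :: "nat \<Rightarrow> (nat set set \<Rightarrow> bool) \<Rightarrow> real" where
  "pm_prob n P = real (card {M \<in> perfect_matchings n. P M}) / real (card (perfect_matchings n))"

end

theory Submission
  imports Defs
begin


definition pmV :: "'a set \<Rightarrow> 'a set set set" where
  "pmV V = {M. (\<forall>a\<in>M. card a = 2) \<and> \<Union>M = V \<and>
         (\<forall>a\<in>M. \<forall>b\<in>M. a \<noteq> b \<longrightarrow> a \<inter> b = {})}"

lemma pmV_finite: "finite V \<Longrightarrow> finite (pmV V)"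
proof -
  assume "finite V"
  have "pmV V \<subseteq> Pow (Pow V)" unfolding pmV_def by auto
  then show ?thesis using \<open>finite V\<close> finite_subset by blast
qed

lemma pmV_arc_sub: "M \<in> pmV V \<Longrightarrow> a \<in> M \<Longrightarrow> a \<subseteq> V"
  unfolding pmV_def by auto

lemma pmV_card: "M \<in> pmV V \<Longrightarrow> a \<in> M \<Longrightarrow> card a = 2"
  unfolding pmV_def by auto

lemma pmV_disj: "M \<in> pmV V \<Longrightarrow> a \<in> M \<Longrightarrow> b \<in> M \<Longrightarrow> a \<noteq> b \<Longrightarrow> a \<inter> b = {}"
  unfolding pmV_def by auto

lemma pmV_bij:
  assumes "\<Union>p \<subseteq> V" "\<forall>a\<in>p. card a = 2" "\<forall>a\<in>p. \<forall>b\<in>p. a \<noteq> b \<longrightarrow> a \<inter> b = {}"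
  shows "bij_betw (\<lambda>M. M \<union> p) (pmV (V - \<Union>p)) {M \<in> pmV V. p \<subseteq> M}"
proof (rule bij_betw_byWitness[where f' = "\<lambda>M. M - p"])
  have ne: "a \<noteq> {}" if "card a = 2" for a :: "'a set" using that by auto
  show "\<forall>M\<in>pmV (V - \<Union> p). M \<union> p - p = M"
  proof
    fix M assume M: "M \<in> pmV (V - \<Union> p)"
    have "M \<inter> p = {}"
    proof (rule ccontr)
      assume "M \<inter> p \<noteq> {}"
      then obtain a where a: "a \<in> M" "a \<in> p" by auto
      then have "a \<subseteq> V - \<Union>p" using pmV_arc_sub[OF M] by auto
      moreover have "a \<subseteq> \<Union>p" using a by auto
      moreover have "a \<noteq> {}" using ne assms(2) a by auto
      ultimately show False by auto
    qed
    then show "M \<union> p - p = M" by auto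
  qed
  show "\<forall>M\<in>{M \<in> pmV V. p \<subseteq> M}. M - p \<union> p = M" by auto
  show "(\<lambda>M. M \<union> p) ` pmV (V - \<Union> p) \<subseteq> {M \<in> pmV V. p \<subseteq> M}"
  proof
    fix N assume "N \<in> (\<lambda>M. M \<union> p) ` pmV (V - \<Union> p)"
    then obtain M where M: "M \<in> pmV (V - \<Union> p)" and N: "N = M \<union> p" by auto
    have "\<forall>a\<in>N. card a = 2" using M assms(2) N unfolding pmV_def by auto
    moreover have "\<Union>N = V" using M assms(1) N unfolding pmV_def by auto
    moreover have "\<forall>a\<in>N. \<forall>b\<in>N. a \<noteq> b \<longrightarrow> a \<inter> b = {}"
    proof (intro ballI impI)
      fix a b assume ab: "a \<in> N" "b \<in> N" "a \<noteq> b"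
      show "a \<inter> b = {}"
      proof (cases "a \<in> p")
        case True
        show ?thesis
        proof (cases "b \<in> p")
          case True with \<open>a \<in> p\<close> ab assms(3) show ?thesis by auto
        next
          case False
          then have "b \<in> M" using ab N by auto
          then have "b \<subseteq> V - \<Union>p" using pmV_arc_sub[OF M] by auto
          then show ?thesis using \<open>a \<in> p\<close> by auto
        qed
      next
        case False
        then have "a \<in> M" using ab N by auto
        then have aa: "a \<subseteq> V - \<Union>p" using pmV_arc_sub[OF M] by auto
        show ?thesis
        proof (cases "b \<in> p")
          case True with aa show ?thesis by auto
        next
          case False
          then have "b \<in> M" using ab N by auto
          then show ?thesis using pmV_disj[OF M \<open>a \<in> M\<close>] ab by auto
        qed
      qed
    qed
    ultimately show "N \<in> {M \<in> pmV V. p \<subseteq> M}" unfolding pmV_def N by auto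
  qed
  show "(\<lambda>M. M - p) ` {M \<in> pmV V. p \<subseteq> M} \<subseteq> pmV (V - \<Union> p)"
  proof
    fix N assume "N \<in> (\<lambda>M. M - p) ` {M \<in> pmV V. p \<subseteq> M}"
    then obtain M where M: "M \<in> pmV V" "p \<subseteq> M" and N: "N = M - p" by auto
    have "\<forall>a\<in>N. card a = 2" using M N unfolding pmV_def by auto
    moreover have "\<Union>N = V - \<Union>p"
    proof
      show "\<Union>N \<subseteq> V - \<Union>p"
      proof
        fix x assume "x \<in> \<Union>N"
        then obtain a where a: "a \<in> M" "a \<notin> p" "x \<in> a" using N by auto
        have "x \<in> V" using pmV_arc_sub[OF M(1) a(1)] a by auto
        moreover have "x \<notin> \<Union>p"
        proof
          assume "x \<in> \<Union>p"
          then obtain b where b: "b \<in> p" "x \<in> b" by auto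
          then have "a \<noteq> b" using a by auto
          then have "a \<inter> b = {}" using pmV_disj[OF M(1) a(1)] b M(2) by auto
          then show False using a b by auto
        qed
        ultimately show "x \<in> V - \<Union>p" by auto
      qed
      show "V - \<Union>p \<subseteq> \<Union>N" using M N unfolding pmV_def by auto
    qed
    moreover have "\<forall>a\<in>N. \<forall>b\<in>N. a \<noteq> b \<longrightarrow> a \<inter> b = {}" using M N unfolding pmV_def by auto
    ultimately show "N \<in> pmV (V - \<Union> p)" unfolding pmV_def by auto
  qed
qed

lemma pmV_sum:
  assumes "\<Union>p \<subseteq> V" "\<forall>a\<in>p. card a = 2" "\<forall>a\<in>p. \<forall>b\<in>p. a \<noteq> b \<longrightarrow> a \<inter> b = {}"
  shows "sum f {M \<in> pmV V. p \<subseteq> M} = sum (\<lambda>M. f (M \<union> p)) (pmV (V - \<Union>p))"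
  using sum.reindex_bij_betw[OF pmV_bij[OF assms], of f] by simp

lemma partner_ex:
  assumes "M \<in> pmV V" "x \<in> V"
  shows "\<exists>y. y \<in> V \<and> y \<noteq> x \<and> {x, y} \<in> M"
proof -
  obtain a where a: "a \<in> M" "x \<in> a" using assms unfolding pmV_def by auto
  have "card a = 2" using pmV_card[OF assms(1) a(1)] .
  then obtain u v where uv: "a = {u, v}" "u \<noteq> v" by (auto simp: card_2_iff)
  then have "a = {x, (if u = x then v else u)}" "(if u = x then v else u) \<noteq> x"
    using a(2) by auto
  moreover have "(if u = x then v else u) \<in> V" using pmV_arc_sub[OF assms(1) a(1)] uv by auto
  ultimately show ?thesis using a(1) by metis
qed

lemma partner_uniq:
  assumes "M \<in> pmV V" "{x, y} \<in> M" "{x, z} \<in> M"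
  shows "y = z"
proof -
  have "{x, y} = {x, z}" using pmV_disj[OF assms(1) assms(2) assms(3)] by auto
  moreover have "y \<noteq> x" using pmV_card[OF assms(1) assms(2)] by (auto)
  ultimately show ?thesis by (metis doubleton_eq_iff)
qed

definition Dn :: "nat \<Rightarrow> nat" where "Dn n = (\<Prod>i<n. 2 * i + 1)"

lemma Dn_Suc: "Dn (Suc n) = (2 * n + 1) * Dn n"
  unfolding Dn_def by simp

lemma card_pmV: "finite V \<Longrightarrow> card V = 2 * n \<Longrightarrow> card (pmV V) = Dn n"
proof (induction n arbitrary: V)
  case 0
  then have "V = {}" by auto
  have "pmV V = {{}}"
  proof
    show "pmV V \<subseteq> {{}}"
    proof
      fix M assume M: "M \<in> pmV V"
      have "M = {}"
      proof (rule ccontr)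
        assume "M \<noteq> {}"
        then obtain a where "a \<in> M" by auto
        then have "a \<subseteq> {}" "card a = 2" using pmV_arc_sub[OF M] pmV_card[OF M] \<open>V = {}\<close> by auto
        then show False by auto
      qed
      then show "M \<in> {{}}" by auto
    qed
    show "{{}} \<subseteq> pmV V" using \<open>V = {}\<close> unfolding pmV_def by auto
  qed
  then show ?case by (simp add: Dn_def)
next
  case (Suc n)
  then obtain x where x: "x \<in> V" by fastforce
  let ?A = "\<lambda>y. {M \<in> pmV V. {{x, y}} \<subseteq> M}"
  have cover: "pmV V = (\<Union>y\<in>V - {x}. ?A y)"
  proof
    show "pmV V \<subseteq> (\<Union>y\<in>V - {x}. ?A y)"
    proof
      fix M assume M: "M \<in> pmV V"
      obtain y where "y \<in> V" "y \<noteq> x" "{x, y} \<in> M" using partner_ex[OF M x] by blast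
      then show "M \<in> (\<Union>y\<in>V - {x}. ?A y)" using M by blast
    qed
    show "(\<Union>y\<in>V - {x}. ?A y) \<subseteq> pmV V" by blast
  qed
  have disj: "\<forall>y\<in>V - {x}. \<forall>z\<in>V - {x}. y \<noteq> z \<longrightarrow> ?A y \<inter> ?A z = {}"
  proof (intro ballI impI)
    fix y z assume "y \<in> V - {x}" "z \<in> V - {x}" "y \<noteq> z"
    show "?A y \<inter> ?A z = {}"
    proof (rule ccontr)
      assume "?A y \<inter> ?A z \<noteq> {}"
      then obtain M where "M \<in> pmV V" "{x, y} \<in> M" "{x, z} \<in> M" by blast
      then have "y = z" by (rule partner_uniq)
      then show False using \<open>y \<noteq> z\<close> by simp
    qed
  qed
  have fin: "\<forall>y\<in>V - {x}. finite (?A y)" using pmV_finite[OF Suc.prems(1)] by auto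
  have each: "card (?A y) = Dn n" if y: "y \<in> V - {x}" for y
  proof -
    have "bij_betw (\<lambda>M. M \<union> {{x, y}}) (pmV (V - \<Union>{{x, y}})) (?A y)"
      by (rule pmV_bij) (use x y in auto)
    then have "card (?A y) = card (pmV (V - {x, y}))" by (simp add: bij_betw_same_card)
    also have "\<dots> = Dn n"
      using Suc.IH[of "V - {x, y}"] Suc.prems x y by auto
    finally show ?thesis .
  qed
  have "card (pmV V) = card (\<Union>y\<in>V - {x}. ?A y)" using arg_cong[OF cover, of card] .
  also have "\<dots> = (\<Sum>y\<in>V - {x}. card (?A y))"
    by (rule card_UN_disjoint) (use Suc.prems(1) fin disj in simp_all)
  also have "\<dots> = (\<Sum>y\<in>V - {x}. Dn n)" using each by simp
  also have "\<dots> = (2 * n + 1) * Dn n" using Suc.prems x by simp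
  finally show ?case by (simp add: Dn_Suc)
qed



definition invol :: "'a set \<Rightarrow> ('a \<Rightarrow> 'a) \<Rightarrow> bool" where
  "invol V s \<longleftrightarrow> finite V \<and> (\<forall>x\<in>V. s x \<in> V \<and> s (s x) = x \<and> s x \<noteq> x)"

definition Lc :: "('a \<Rightarrow> 'a) \<Rightarrow> 'a set set \<Rightarrow> 'a set set" where
  "Lc s M = {a \<in> M. s ` a = a}"

definition Cc :: "('a \<Rightarrow> 'a) \<Rightarrow> 'a set set \<Rightarrow> 'a set set" where
  "Cc s M = {a \<in> M. s ` a \<noteq> a \<and> s ` a \<in> M}"

definition Xs :: "('a \<Rightarrow> 'a) \<Rightarrow> 'a set set \<Rightarrow> nat" where
  "Xs s M = card (Lc s M)"

definition Ys :: "('a \<Rightarrow> 'a) \<Rightarrow> 'a set set \<Rightarrow> nat" where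
  "Ys s M = card ((\<lambda>a. {a, s ` a}) ` Cc s M)"


lemma invol_sub:
  assumes "invol V s" "W \<subseteq> V" "s ` W \<subseteq> W"
  shows "invol (V - W) s"
  using assms unfolding invol_def by (metis Diff_iff finite_Diff image_subset_iff)

lemma img_invol: "invol V s \<Longrightarrow> a \<subseteq> V \<Longrightarrow> s ` (s ` a) = a"
  unfolding invol_def by (force simp: image_image)

lemma card_Union_arcs:
  assumes "M \<in> pmV V" "finite V" "C \<subseteq> M"
  shows "card (\<Union>C) = 2 * card C"
proof -
  have pw: "pairwise disjnt C"
    unfolding pairwise_def disjnt_def
  proof (intro ballI impI)
    fix a b assume "a \<in> C" "b \<in> C" "a \<noteq> b"
    then show "a \<inter> b = {}" using pmV_disj[OF assms(1)] assms(3) by blast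
  qed
  have fa: "finite A" if "A \<in> C" for A
  proof -
    have "A \<subseteq> V" using pmV_arc_sub[OF assms(1)] assms(3) that by blast
    then show ?thesis using assms(2) by (rule finite_subset)
  qed
  have "card (\<Union>C) = sum card C" by (rule card_Union_disjoint[OF pw fa])
  also have "\<dots> = sum (\<lambda>_. 2) C"
  proof (rule sum.cong)
    fix a assume "a \<in> C" then show "card a = 2" using pmV_card[OF assms(1)] assms(3) by blast
  qed simp
  finally show ?thesis by simp
qed

lemma pmV_finM: "M \<in> pmV V \<Longrightarrow> finite V \<Longrightarrow> finite M"
proof -
  assume "M \<in> pmV V" "finite V"
  then have "M \<subseteq> Pow V" using pmV_arc_sub by blast
  then show "finite M" using \<open>finite V\<close> finite_subset by blast
qed

lemma card2_eq:
  assumes "card a = 2" "x \<in> a" "y \<in> a" "x \<noteq> y"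
  shows "a = {x, y}"
proof -
  have "finite a" using assms(1) by (metis card.infinite zero_neq_numeral)
  moreover have "{x, y} \<subseteq> a" using assms by blast
  moreover have "card {x, y} = card a" using assms by simp
  ultimately show ?thesis by (metis card_subset_eq)
qed


lemma Lc_Union:
  assumes "invol V s" "M \<in> pmV V"
  shows "\<Union>(Lc s M) = {x \<in> V. {x, s x} \<in> M}"
proof
  show "\<Union>(Lc s M) \<subseteq> {x \<in> V. {x, s x} \<in> M}"
  proof
    fix x assume "x \<in> \<Union>(Lc s M)"
    then obtain a where a: "a \<in> M" "s ` a = a" "x \<in> a" unfolding Lc_def by auto
    have xV: "x \<in> V" using pmV_arc_sub[OF assms(2) a(1)] a(3) by auto
    have "s x \<in> a" using a by blast
    moreover have "s x \<noteq> x" using assms(1) xV unfolding invol_def by auto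
    moreover have "card a = 2" using pmV_card[OF assms(2) a(1)] .
    ultimately have "a = {x, s x}" using a(3) card2_eq by metis
    then show "x \<in> {x \<in> V. {x, s x} \<in> M}" using a xV by auto
  qed
  show "{x \<in> V. {x, s x} \<in> M} \<subseteq> \<Union>(Lc s M)"
  proof
    fix x assume x: "x \<in> {x \<in> V. {x, s x} \<in> M}"
    then have "s ` {x, s x} = {x, s x}" using assms(1) unfolding invol_def by auto
    then show "x \<in> \<Union>(Lc s M)" using x unfolding Lc_def by auto
  qed
qed

lemma card_loops:
  assumes "invol V s" "M \<in> pmV V"
  shows "card {x \<in> V. {x, s x} \<in> M} = 2 * Xs s M"
  unfolding Xs_def Lc_Union[OF assms, symmetric]
  by (rule card_Union_arcs[OF assms(2)]) (use assms(1) in \<open>auto simp: invol_def Lc_def\<close>)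

lemma Cc_Union:
  assumes "invol V s" "M \<in> pmV V"
  shows "\<Union>(Cc s M) = {x \<in> V. \<exists>y \<in> V - {x, s x}. {x, y} \<in> M \<and> {s x, s y} \<in> M}"
proof
  show "\<Union>(Cc s M) \<subseteq> {x \<in> V. \<exists>y \<in> V - {x, s x}. {x, y} \<in> M \<and> {s x, s y} \<in> M}"
  proof
    fix x assume "x \<in> \<Union>(Cc s M)"
    then obtain a where a: "a \<in> M" "s ` a \<noteq> a" "s ` a \<in> M" "x \<in> a" unfolding Cc_def by auto
    have aV: "a \<subseteq> V" using pmV_arc_sub[OF assms(2) a(1)] .
    have "card a = 2" using pmV_card[OF assms(2) a(1)] .
    then obtain y where y: "a = {x, y}" "y \<noteq> x" using a(4) by (auto simp: card_2_iff doubleton_eq_iff) 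
    have "y \<noteq> s x"
    proof
      assume "y = s x"
      then have "s ` a = a" using y assms(1) aV unfolding invol_def by auto
      then show False using a(2) by auto
    qed
    then show "x \<in> {x \<in> V. \<exists>y \<in> V - {x, s x}. {x, y} \<in> M \<and> {s x, s y} \<in> M}"
      using y aV a by auto
  qed
  show "{x \<in> V. \<exists>y \<in> V - {x, s x}. {x, y} \<in> M \<and> {s x, s y} \<in> M} \<subseteq> \<Union>(Cc s M)"
  proof
    fix x assume "x \<in> {x \<in> V. \<exists>y \<in> V - {x, s x}. {x, y} \<in> M \<and> {s x, s y} \<in> M}"
    then obtain y where y: "x \<in> V" "y \<in> V" "y \<noteq> x" "y \<noteq> s x" "{x, y} \<in> M" "{s x, s y} \<in> M" by auto
    have "s ` {x, y} \<noteq> {x, y}"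
    proof
      assume "s ` {x, y} = {x, y}"
      then have "s x \<in> {x, y}" by auto
      then show False using y assms(1) unfolding invol_def by auto
    qed
    then have "{x, y} \<in> Cc s M" unfolding Cc_def using y(5,6) by simp
    then show "x \<in> \<Union>(Cc s M)" by blast
  qed
qed

lemma Ys_Cc:
  assumes "invol V s" "M \<in> pmV V"
  shows "2 * Ys s M = card (Cc s M)"
proof -
  let ?P = "(\<lambda>a. {a, s ` a}) ` Cc s M"
  have ss: "s ` (s ` a) = a" if "a \<in> M" for a
    using img_invol[OF assms(1) pmV_arc_sub[OF assms(2) that]] .
  have finC: "finite (Cc s M)" using pmV_finM[OF assms(2)] assms(1) unfolding Cc_def invol_def by auto
  have U: "\<Union>?P = Cc s M"
  proof
    show "\<Union>?P \<subseteq> Cc s M"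
    proof
      fix b assume "b \<in> \<Union>?P"
      then obtain a where a: "a \<in> Cc s M" "b \<in> {a, s ` a}" by blast
      then have aM: "a \<in> M" "s ` a \<noteq> a" "s ` a \<in> M" unfolding Cc_def by auto
      have "s ` a \<in> Cc s M" unfolding Cc_def using aM ss[OF aM(1)] by auto
      then show "b \<in> Cc s M" using a by blast
    qed
    show "Cc s M \<subseteq> \<Union>?P" by auto
  qed
  have "card (\<Union>?P) = sum card ?P"
  proof (rule card_Union_disjoint)
    show "pairwise disjnt ?P"
      unfolding pairwise_def disjnt_def
    proof (clarify)
      fix a b assume a: "a \<in> Cc s M" and b: "b \<in> Cc s M" and ne: "{a, s ` a} \<noteq> {b, s ` b}"
      have "a \<in> M" "b \<in> M" using a b unfolding Cc_def by auto
      note sa = ss[OF \<open>a \<in> M\<close>] and sb = ss[OF \<open>b \<in> M\<close>]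
      have 1: "a \<noteq> b" using ne by auto
      have 2: "a \<noteq> s ` b"
      proof
        assume h: "a = s ` b"
        then have "s ` a = b" using sb by simp
        then show False using ne h by (simp add: insert_commute)
      qed
      have 3: "s ` a \<noteq> b"
      proof
        assume h: "s ` a = b"
        then have "s ` b = a" using sa by simp
        then show False using ne h by (simp add: insert_commute)
      qed
      have 4: "s ` a \<noteq> s ` b"
      proof
        assume h: "s ` a = s ` b"
        then have "a = b" using sa sb by metis
        then show False using 1 by simp
      qed
      from 1 2 3 4 show "{a, s ` a} \<inter> {b, s ` b} = {}" by auto
    qed
    show "\<And>A. A \<in> ?P \<Longrightarrow> finite A" by auto
  qed
  also have "\<dots> = sum (\<lambda>_. 2) ?P"
  proof (rule sum.cong)
    fix P assume "P \<in> ?P"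
    then obtain a where "a \<in> Cc s M" "P = {a, s ` a}" by blast
    moreover then have "a \<noteq> s ` a" unfolding Cc_def by auto
    ultimately show "card P = 2" by simp
  qed simp
  finally show ?thesis using U unfolding Ys_def by simp
qed

lemma card_coupled:
  assumes "invol V s" "M \<in> pmV V"
  shows "card {x \<in> V. \<exists>y \<in> V - {x, s x}. {x, y} \<in> M \<and> {s x, s y} \<in> M} = 4 * Ys s M"
proof -
  have "card {x \<in> V. \<exists>y \<in> V - {x, s x}. {x, y} \<in> M \<and> {s x, s y} \<in> M} = 2 * card (Cc s M)"
    unfolding Cc_Union[OF assms, symmetric]
    by (rule card_Union_arcs[OF assms(2)]) (use assms(1) in \<open>auto simp: invol_def Cc_def\<close>)
  then show ?thesis using Ys_Cc[OF assms] by simp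
qed



lemma arc_notin:
  assumes "M' \<in> pmV (V - W)" "x \<in> W" "x \<in> e"
  shows "e \<notin> M'"
  using pmV_arc_sub[OF assms(1)] assms(2,3) by blast

lemma loop_stats:
  assumes iv: "invol V s" and x: "x \<in> V" and M': "M' \<in> pmV (V - {x, s x})"
  shows "Xs s (M' \<union> {{x, s x}}) = Suc (Xs s M')" "Ys s (M' \<union> {{x, s x}}) = Ys s M'"
proof -
  let ?e = "{x, s x}"
  have sx: "s x \<in> V" "s (s x) = x" "s x \<noteq> x" using iv x unfolding invol_def by auto
  have se: "s ` ?e = ?e" using sx by auto
  have eM: "?e \<notin> M'" by (rule arc_notin[OF M', of x]) auto
  have ss: "s ` (s ` a) = a" if "a \<in> M'" for a
    using img_invol[OF iv] pmV_arc_sub[OF M' that] by blast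
  have nse: "s ` a \<noteq> ?e" if "a \<in> M'" for a
  proof
    assume "s ` a = ?e"
    then have "a = s ` ?e" using ss[OF that] by simp
    then show False using se eM that by simp
  qed
  have L: "Lc s (M' \<union> {?e}) = insert ?e (Lc s M')"
    unfolding Lc_def using se by auto
  have finM: "finite M'" using pmV_finM[OF M'] iv unfolding invol_def by auto
  have "?e \<notin> Lc s M'" using eM unfolding Lc_def by auto
  then show "Xs s (M' \<union> {?e}) = Suc (Xs s M')"
    unfolding Xs_def L using finM unfolding Lc_def by simp
  have C: "Cc s (M' \<union> {?e}) = Cc s M'"
    unfolding Cc_def using se nse by auto
  show "Ys s (M' \<union> {?e}) = Ys s M'" unfolding Ys_def C ..
qed

lemma pair_stats:
  assumes iv: "invol V s" and x: "x \<in> V" and y: "y \<in> V" "y \<noteq> x" "y \<noteq> s x"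
    and M': "M' \<in> pmV (V - {x, y, s x, s y})"
    and M: "M' \<union> {{x, y}, {s x, s y}} \<in> pmV V"
  shows "Xs s (M' \<union> {{x, y}, {s x, s y}}) = Xs s M'"
    "Ys s (M' \<union> {{x, y}, {s x, s y}}) = Suc (Ys s M')"
proof -
  let ?e = "{x, y}" and ?f = "{s x, s y}"
  have sx: "s x \<in> V" "s (s x) = x" "s x \<noteq> x" using iv x unfolding invol_def by auto
  have sy: "s y \<in> V" "s (s y) = y" "s y \<noteq> y" using iv y unfolding invol_def by auto
  have se: "s ` ?e = ?f" by auto
  have sf: "s ` ?f = ?e" using sx sy by auto
  have ef: "?e \<noteq> ?f"
  proof
    assume "?e = ?f"
    then have "s x \<in> ?e" by simp
    then show False using y sx by simp
  qed
  have eM: "?e \<notin> M'" by (rule arc_notin[OF M', of x]) auto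
  have fM: "?f \<notin> M'" by (rule arc_notin[OF M', of "s x"]) auto
  have ss: "s ` (s ` a) = a" if "a \<in> M'" for a
    using img_invol[OF iv] pmV_arc_sub[OF M' that] by blast
  have nse: "s ` a \<noteq> ?e" "s ` a \<noteq> ?f" if "a \<in> M'" for a
  proof -
    show "s ` a \<noteq> ?e"
    proof
      assume "s ` a = ?e"
      then have "a = ?f" using ss[OF that] se by metis
      then show False using fM that by simp
    qed
    show "s ` a \<noteq> ?f"
    proof
      assume "s ` a = ?f"
      then have "a = ?e" using ss[OF that] sf by metis
      then show False using eM that by simp
    qed
  qed
  have L: "Lc s (M' \<union> {?e, ?f}) = Lc s M'"
  proof (rule set_eqI)
    fix a
    have "a \<in> Lc s (M' \<union> {?e, ?f}) \<longleftrightarrow> (a \<in> M' \<or> a = ?e \<or> a = ?f) \<and> s ` a = a"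
      unfolding Lc_def by blast
    also have "\<dots> \<longleftrightarrow> a \<in> M' \<and> s ` a = a"
    proof
      assume h: "(a \<in> M' \<or> a = ?e \<or> a = ?f) \<and> s ` a = a"
      have "a \<noteq> ?e" proof assume "a = ?e" then show False using h se ef by simp qed
      moreover have "a \<noteq> ?f" proof assume "a = ?f" then show False using h sf ef by simp qed
      ultimately show "a \<in> M' \<and> s ` a = a" using h by blast
    qed blast
    finally show "a \<in> Lc s (M' \<union> {?e, ?f}) \<longleftrightarrow> a \<in> Lc s M'" unfolding Lc_def by blast
  qed
  then show "Xs s (M' \<union> {?e, ?f}) = Xs s M'" unfolding Xs_def by simp
  have C: "Cc s (M' \<union> {?e, ?f}) = insert ?e (insert ?f (Cc s M'))"
  proof (rule set_eqI)
    fix a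
    have eC: "?e \<in> Cc s (M' \<union> {?e, ?f})" unfolding Cc_def using se ef by simp
    have fC: "?f \<in> Cc s (M' \<union> {?e, ?f})" unfolding Cc_def using sf ef by simp
    show "a \<in> Cc s (M' \<union> {?e, ?f}) \<longleftrightarrow> a \<in> insert ?e (insert ?f (Cc s M'))"
    proof (cases "a = ?e \<or> a = ?f")
      case True
      then show ?thesis using eC fC by blast
    next
      case False
      have "a \<in> Cc s (M' \<union> {?e, ?f}) \<longleftrightarrow> a \<in> M' \<and> s ` a \<noteq> a \<and> s ` a \<in> M' \<union> {?e, ?f}"
        unfolding Cc_def using False by blast
      also have "\<dots> \<longleftrightarrow> a \<in> M' \<and> s ` a \<noteq> a \<and> s ` a \<in> M'"
        using nse by blast
      also have "\<dots> \<longleftrightarrow> a \<in> insert ?e (insert ?f (Cc s M'))"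
        unfolding Cc_def using False by blast
      finally show ?thesis .
    qed
  qed
  have finM: "finite M'" using pmV_finM[OF M'] iv unfolding invol_def by auto
  have finC: "finite (Cc s M')" using finM unfolding Cc_def by simp
  have "card (Cc s (M' \<union> {?e, ?f})) = card (Cc s M') + 2"
    unfolding C using finC eM fM ef unfolding Cc_def by simp
  moreover have ivW: "invol (V - {x, y, s x, s y}) s"
    by (rule invol_sub[OF iv]) (use x y sx sy in auto)
  ultimately have "2 * Ys s (M' \<union> {?e, ?f}) = 2 * Ys s M' + 2"
    using Ys_Cc[OF iv M] Ys_Cc[OF ivW M'] by simp
  then show "Ys s (M' \<union> {?e, ?f}) = Suc (Ys s M')" by simp
qed

definition gsum :: "('a \<Rightarrow> 'a) \<Rightarrow> 'a set \<Rightarrow> nat \<Rightarrow> nat \<Rightarrow> nat" where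
  "gsum s V a b = (\<Sum>M\<in>pmV V. (Xs s M choose a) * (Ys s M choose b))"

lemma times_choose_Suc: "Suc a * (X choose Suc a) = X * ((X - 1) choose a)"
proof (cases X)
  case (Suc m)
  then show ?thesis using Suc_times_binomial[of a m] by (simp del: binomial_Suc_Suc)
qed simp

lemma sum_if_const: "finite A \<Longrightarrow> (\<Sum>x\<in>A. if P x then c else 0) = card {x \<in> A. P x} * (c::nat)"
proof -
  assume "finite A"
  then have "(\<Sum>x\<in>A. if P x then c else 0) = (\<Sum>x\<in>{x \<in> A. P x}. c)"
    by (rule sum.inter_filter[symmetric])
  then show ?thesis by simp
qed
lemma sum_swap_filter:
  assumes "finite A" "finite B"
  shows "(\<Sum>M\<in>A. \<Sum>x\<in>B. if P x M then f x M else (0::nat)) = (\<Sum>x\<in>B. \<Sum>M\<in>{M \<in> A. P x M}. f x M)"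
proof -
  have "(\<Sum>M\<in>A. \<Sum>x\<in>B. if P x M then f x M else (0::nat)) = (\<Sum>x\<in>B. \<Sum>M\<in>A. if P x M then f x M else (0::nat))"
    by (rule sum.swap)
  also have "\<dots> = (\<Sum>x\<in>B. \<Sum>M\<in>{M \<in> A. P x M}. f x M)"
    using assms(1) by (simp add: sum.inter_filter)
  finally show ?thesis .
qed

lemma recA:
  assumes iv: "invol V s"
  shows "2 * Suc a * gsum s V (Suc a) b = (\<Sum>x\<in>V. gsum s (V - {x, s x}) a b)"
proof -
  have finV: "finite V" using iv unfolding invol_def by simp
  have h1: "2 * Suc a * ((Xs s M choose Suc a) * (Ys s M choose b)) =
      (\<Sum>x\<in>V. if {x, s x} \<in> M then ((Xs s M - 1) choose a) * (Ys s M choose b) else 0)"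
    if M: "M \<in> pmV V" for M
  proof -
    have "(\<Sum>x\<in>V. if {x, s x} \<in> M then ((Xs s M - 1) choose a) * (Ys s M choose b) else 0)
        = card {x \<in> V. {x, s x} \<in> M} * (((Xs s M - 1) choose a) * (Ys s M choose b))"
      by (rule sum_if_const[OF finV])
    also have "\<dots> = 2 * Xs s M * (((Xs s M - 1) choose a) * (Ys s M choose b))"
      using card_loops[OF iv M] by simp
    also have "\<dots> = 2 * (Suc a * (Xs s M choose Suc a)) * (Ys s M choose b)"
      by (simp only: times_choose_Suc mult.assoc)
    finally show ?thesis by (simp add: algebra_simps)
  qed
  have "2 * Suc a * gsum s V (Suc a) b = (\<Sum>M\<in>pmV V. 2 * Suc a * ((Xs s M choose Suc a) * (Ys s M choose b)))"
    unfolding gsum_def by (simp add: sum_distrib_left)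
  also have "\<dots> = (\<Sum>M\<in>pmV V. \<Sum>x\<in>V. if {x, s x} \<in> M then ((Xs s M - 1) choose a) * (Ys s M choose b) else 0)"
    using h1 by (rule sum.cong[OF refl])
  also have "\<dots> = (\<Sum>x\<in>V. \<Sum>M\<in>{M \<in> pmV V. {x, s x} \<in> M}. ((Xs s M - 1) choose a) * (Ys s M choose b))"
    by (rule sum_swap_filter[OF pmV_finite[OF finV] finV])
  also have "\<dots> = (\<Sum>x\<in>V. gsum s (V - {x, s x}) a b)"
  proof (rule sum.cong[OF refl])
    fix x assume x: "x \<in> V"
    have sx: "s x \<in> V" "s x \<noteq> x" using iv x unfolding invol_def by auto
    have "(\<Sum>M\<in>{M \<in> pmV V. {x, s x} \<in> M}. ((Xs s M - 1) choose a) * (Ys s M choose b))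
        = (\<Sum>M\<in>{M \<in> pmV V. {{x, s x}} \<subseteq> M}. ((Xs s M - 1) choose a) * (Ys s M choose b))"
      by simp
    also have "\<dots> = (\<Sum>M\<in>pmV (V - \<Union>{{x, s x}}). ((Xs s (M \<union> {{x, s x}}) - 1) choose a) * (Ys s (M \<union> {{x, s x}}) choose b))"
      by (rule pmV_sum) (use x sx in auto)
    also have "\<dots> = (\<Sum>M\<in>pmV (V - {x, s x}). (Xs s M choose a) * (Ys s M choose b))"
    proof (rule sum.cong)
      show "pmV (V - \<Union>{{x, s x}}) = pmV (V - {x, s x})" by simp
      fix M assume "M \<in> pmV (V - {x, s x})"
      then have M: "M \<in> pmV (V - {x, s x})" by simp
      show "((Xs s (M \<union> {{x, s x}}) - 1) choose a) * (Ys s (M \<union> {{x, s x}}) choose b) = (Xs s M choose a) * (Ys s M choose b)"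
        using loop_stats[OF iv x M] by simp
    qed
    finally show "(\<Sum>M\<in>{M \<in> pmV V. {x, s x} \<in> M}. ((Xs s M - 1) choose a) * (Ys s M choose b))
        = gsum s (V - {x, s x}) a b" unfolding gsum_def .
  qed
  finally show ?thesis .
qed

lemma partner_sum:
  assumes M: "M \<in> pmV V" and finV: "finite V"
  shows "(\<Sum>y\<in>V - {x, s x}. if {x, y} \<in> M \<and> {s x, s y} \<in> M then c else 0)
       = (if \<exists>y\<in>V - {x, s x}. {x, y} \<in> M \<and> {s x, s y} \<in> M then c else (0::nat))"
proof (cases "\<exists>y\<in>V - {x, s x}. {x, y} \<in> M \<and> {s x, s y} \<in> M")
  case True
  then obtain y0 where y0: "y0 \<in> V - {x, s x}" "{x, y0} \<in> M" "{s x, s y0} \<in> M" by blast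
  have "{y \<in> V - {x, s x}. {x, y} \<in> M \<and> {s x, s y} \<in> M} = {y0}"
  proof
    show "{y \<in> V - {x, s x}. {x, y} \<in> M \<and> {s x, s y} \<in> M} \<subseteq> {y0}"
    proof
      fix y assume "y \<in> {y \<in> V - {x, s x}. {x, y} \<in> M \<and> {s x, s y} \<in> M}"
      then have "{x, y} \<in> M" by blast
      then have "y = y0" using partner_uniq[OF M _ y0(2)] by blast
      then show "y \<in> {y0}" by simp
    qed
    show "{y0} \<subseteq> {y \<in> V - {x, s x}. {x, y} \<in> M \<and> {s x, s y} \<in> M}" using y0 by blast
  qed
  then show ?thesis using True sum_if_const[of "V - {x, s x}" "\<lambda>y. {x, y} \<in> M \<and> {s x, s y} \<in> M" c] finV
    by simp
next
  case False
  then show ?thesis by (intro trans[OF sum.neutral]) auto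
qed

lemma recB:
  assumes iv: "invol V s"
  shows "4 * Suc b * gsum s V a (Suc b) = (\<Sum>x\<in>V. \<Sum>y\<in>V - {x, s x}. gsum s (V - {x, y, s x, s y}) a b)"
proof -
  have finV: "finite V" using iv unfolding invol_def by simp
  define P where "P x y M \<longleftrightarrow> {x, y} \<in> M \<and> {s x, s y} \<in> M" for x y M
  define c where "c M = (Xs s M choose a) * ((Ys s M - 1) choose b)" for M
  have h1: "4 * Suc b * ((Xs s M choose a) * (Ys s M choose Suc b)) =
      (\<Sum>x\<in>V. \<Sum>y\<in>V - {x, s x}. if P x y M then c M else 0)"
    if M: "M \<in> pmV V" for M
  proof -
    have "(\<Sum>x\<in>V. \<Sum>y\<in>V - {x, s x}. if P x y M then c M else 0)
        = (\<Sum>x\<in>V. if \<exists>y\<in>V - {x, s x}. {x, y} \<in> M \<and> {s x, s y} \<in> M then c M else 0)"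
      unfolding P_def using partner_sum[OF M finV] by simp
    also have "\<dots> = card {x \<in> V. \<exists>y\<in>V - {x, s x}. {x, y} \<in> M \<and> {s x, s y} \<in> M} * c M"
      by (rule sum_if_const[OF finV])
    also have "\<dots> = 4 * Ys s M * c M" using card_coupled[OF iv M] by simp
    also have "\<dots> = 4 * (Suc b * (Ys s M choose Suc b)) * (Xs s M choose a)"
      unfolding c_def times_choose_Suc by (simp add: algebra_simps)
    finally show ?thesis by (simp add: algebra_simps)
  qed
  have "4 * Suc b * gsum s V a (Suc b) = (\<Sum>M\<in>pmV V. 4 * Suc b * ((Xs s M choose a) * (Ys s M choose Suc b)))"
    unfolding gsum_def by (simp add: sum_distrib_left)
  also have "\<dots> = (\<Sum>M\<in>pmV V. \<Sum>x\<in>V. \<Sum>y\<in>V - {x, s x}. if P x y M then c M else 0)"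
    using h1 by (rule sum.cong[OF refl])
  also have "\<dots> = (\<Sum>x\<in>V. \<Sum>M\<in>pmV V. \<Sum>y\<in>V - {x, s x}. if P x y M then c M else 0)"
    by (rule sum.swap)
  also have "\<dots> = (\<Sum>x\<in>V. \<Sum>y\<in>V - {x, s x}. \<Sum>M\<in>pmV V. if P x y M then c M else 0)"
    by (rule sum.cong[OF refl]) (rule sum.swap)
  also have "\<dots> = (\<Sum>x\<in>V. \<Sum>y\<in>V - {x, s x}. gsum s (V - {x, y, s x, s y}) a b)"
  proof (intro sum.cong[OF refl])
    fix x y assume x: "x \<in> V" and y: "y \<in> V - {x, s x}"
    have sx: "s x \<in> V" "s (s x) = x" "s x \<noteq> x" using iv x unfolding invol_def by auto
    have sy: "s y \<in> V" "s (s y) = y" "s y \<noteq> y" using iv y unfolding invol_def by auto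
    have sxy: "s x \<noteq> s y"
    proof
      assume "s x = s y"
      then have "s (s x) = s (s y)" by simp
      then show False using sx sy y by simp
    qed
    have syx: "s y \<noteq> x"
    proof
      assume "s y = x"
      then have "s (s y) = s x" by simp
      then show False using sy y by simp
    qed
    let ?p = "{{x, y}, {s x, s y}}"
    have p1: "\<Union>?p \<subseteq> V" using x y sx sy by auto
    have p2: "\<forall>a\<in>?p. card a = 2" using y sxy by auto
    have p3: "\<forall>a\<in>?p. \<forall>b\<in>?p. a \<noteq> b \<longrightarrow> a \<inter> b = {}" using y sx sy syx by auto
    have U: "\<Union>?p = {x, y, s x, s y}" by auto
    have "(\<Sum>M\<in>pmV V. if P x y M then c M else 0) = (\<Sum>M\<in>{M \<in> pmV V. ?p \<subseteq> M}. c M)"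
      using finV unfolding P_def by (simp add: sum.inter_filter pmV_finite)
    also have "\<dots> = (\<Sum>M\<in>pmV (V - \<Union>?p). c (M \<union> ?p))"
      by (rule pmV_sum[OF p1 p2 p3])
    also have "\<dots> = gsum s (V - {x, y, s x, s y}) a b"
      unfolding gsum_def
    proof (rule sum.cong)
      show "pmV (V - \<Union>?p) = pmV (V - {x, y, s x, s y})" using U by simp
      fix M assume "M \<in> pmV (V - {x, y, s x, s y})"
      then have M: "M \<in> pmV (V - {x, y, s x, s y})" by simp
      have MV: "M \<union> ?p \<in> pmV V"
        using bij_betwE[OF pmV_bij[OF p1 p2 p3]] M U by auto
      show "c (M \<union> ?p) = (Xs s M choose a) * (Ys s M choose b)"
        unfolding c_def using pair_stats[OF iv x _ _ _ M MV] y by simp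
    qed
    finally show "(\<Sum>M\<in>pmV V. if P x y M then c M else 0) = gsum s (V - {x, y, s x, s y}) a b" .
  qed
  finally show ?thesis .
qed



fun rho :: "nat \<Rightarrow> nat \<Rightarrow> nat \<Rightarrow> real" where
  "rho n 0 0 = 1"
| "rho 0 (Suc a) b = 0"
| "rho (Suc m) (Suc a) b = real (Suc m) / (real (Suc a) * (2 * real m + 1)) * rho m a b"
| "rho 0 0 (Suc b) = 0"
| "rho (Suc 0) 0 (Suc b) = 0"
| "rho (Suc (Suc m)) 0 (Suc b) =
     real (Suc (Suc m)) * real (Suc m) / (real (Suc b) * (2 * real m + 3) * (2 * real m + 1)) * rho m 0 b"

lemma invol_facts:
  assumes "invol V s" "x \<in> V"
  shows "s x \<in> V" "s (s x) = x" "s x \<noteq> x" "finite V"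
  using assms unfolding invol_def by auto

lemma card_minus2:
  assumes iv: "invol V s" and x: "x \<in> V"
  shows "card (V - {x, s x}) = card V - 2" "invol (V - {x, s x}) s"
proof -
  note f = invol_facts[OF iv x]
  show "card (V - {x, s x}) = card V - 2"
    using f x by (subst card_Diff_subset) auto
  show "invol (V - {x, s x}) s"
    by (rule invol_sub[OF iv]) (use f x in auto)
qed

lemma card_minus4:
  assumes iv: "invol V s" and x: "x \<in> V" and y: "y \<in> V - {x, s x}"
  shows "card (V - {x, y, s x, s y}) = card V - 4" "invol (V - {x, y, s x, s y}) s"
proof -
  note f = invol_facts[OF iv x]
  have yV: "y \<in> V" using y by simp
  note g = invol_facts[OF iv yV]
  have sxy: "s x \<noteq> s y"
  proof
    assume "s x = s y"
    then have "s (s x) = s (s y)" by simp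
    then show False using f g y by simp
  qed
  have syx: "s y \<noteq> x"
  proof
    assume "s y = x"
    then have "s (s y) = s x" by simp
    then show False using g y by simp
  qed
  have c4: "card {x, y, s x, s y} = 4" using f g y sxy syx by auto
  show "card (V - {x, y, s x, s y}) = card V - 4"
    using f g y c4 x by (subst card_Diff_subset) auto
  show "invol (V - {x, y, s x, s y}) s"
    by (rule invol_sub[OF iv]) (use f g y x in auto)
qed

lemma cancel2: "(A::real) \<noteq> 0 \<Longrightarrow> B \<noteq> 0 \<Longrightarrow> (A*B*D) * (N/(c*A*B) * r) = N*(D*r)/c"
  by (simp add: field_simps)

lemma cancel1: "(B::real) \<noteq> 0 \<Longrightarrow> (B*D) * (N/(c*B) * r) = N*(D*r)/c"
  by (simp add: field_simps)

lemma Dn_pos: "Dn n > 0"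
  unfolding Dn_def by (simp add: prod_pos)

lemma gsum00: "invol V s \<Longrightarrow> card V = 2 * n \<Longrightarrow> gsum s V 0 0 = Dn n"
  unfolding gsum_def using card_pmV[of V n] by (simp add: invol_def)

lemma gsum_rho:
  "invol V s \<Longrightarrow> card V = 2 * n \<Longrightarrow> real (gsum s V a b) = real (Dn n) * rho n a b"
proof (induction a arbitrary: n V)
  case 0
  then show ?case
  proof (induction b arbitrary: n V)
    case 0
    then show ?case using gsum00 by simp
  next
    case (Suc b)
    note iv = Suc.prems(1)
    have finV: "finite V" using iv unfolding invol_def by simp
    have rec: "real (4 * Suc b * gsum s V 0 (Suc b)) = real (\<Sum>x\<in>V. \<Sum>y\<in>V - {x, s x}. gsum s (V - {x, y, s x, s y}) 0 b)"
      using recB[OF iv] by metis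
    show ?case
    proof (cases n)
      case 0
      then have "V = {}" using Suc.prems finV by simp
      then show ?thesis using rec 0 by simp
    next
      case (Suc n')
      show ?thesis
      proof (cases n')
        case 0
        have e: "V - {x, s x} = {}" if "x \<in> V" for x
        proof -
          have "card (V - {x, s x}) = 0" using card_minus2[OF iv that] Suc.prems Suc 0 by simp
          then show ?thesis using finV by simp
        qed
        have "(\<Sum>x\<in>V. \<Sum>y\<in>V - {x, s x}. gsum s (V - {x, y, s x, s y}) 0 b) = 0"
        proof (rule sum.neutral, rule ballI)
          fix x assume "x \<in> V"
          show "(\<Sum>y\<in>V - {x, s x}. gsum s (V - {x, y, s x, s y}) 0 b) = 0"
            unfolding e[OF \<open>x \<in> V\<close>] by simp
        qed
        then have "real (4 * Suc b * gsum s V 0 (Suc b)) = 0" using rec by (simp only:)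
        then show ?thesis using Suc 0 by simp
      next
        case (Suc m)
        have each: "real (gsum s (V - {x, y, s x, s y}) 0 b) = real (Dn m) * rho m 0 b"
          if x: "x \<in> V" and y: "y \<in> V - {x, s x}" for x y
          using Suc.IH[OF card_minus4(2)[OF iv x y]] card_minus4(1)[OF iv x y] Suc.prems \<open>n = Suc n'\<close> Suc
          by simp
        have "real (\<Sum>x\<in>V. \<Sum>y\<in>V - {x, s x}. gsum s (V - {x, y, s x, s y}) 0 b)
            = (\<Sum>x\<in>V. \<Sum>y\<in>V - {x, s x}. real (Dn m) * rho m 0 b)"
          using each by (simp add: of_nat_sum)
        also have "\<dots> = (\<Sum>x\<in>V. real (card V - 2) * (real (Dn m) * rho m 0 b))"
          using card_minus2[OF iv] by simp
        also have "\<dots> = real (card V) * real (card V - 2) * (real (Dn m) * rho m 0 b)"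
          by simp
        finally have r: "real (4 * Suc b * gsum s V 0 (Suc b)) = real (2 * m + 4) * real (2 * m + 2) * (real (Dn m) * rho m 0 b)"
          using rec Suc.prems \<open>n = Suc n'\<close> Suc by simp
        have D: "real (Dn (Suc (Suc m))) = (2 * real m + 3) * (2 * real m + 1) * real (Dn m)"
          by (simp add: Dn_Suc algebra_simps)
        have r2: "4 * (real (gsum s V 0 (Suc b)) * (real b + 1)) = 4 * ((real m + 2) * (real m + 1) * (real (Dn m) * rho m 0 b))"
          using r by (simp add: algebra_simps)
        then have r3: "real (gsum s V 0 (Suc b)) * (real b + 1) = (real m + 2) * (real m + 1) * (real (Dn m) * rho m 0 b)"
          by simp
        have G: "real (gsum s V 0 (Suc b)) = (real m + 2) * (real m + 1) * (real (Dn m) * rho m 0 b) / (real b + 1)"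
          using r3 by (simp add: field_simps)
        have nz: "2 * real m + 3 \<noteq> 0" "2 * real m + 1 \<noteq> 0" "real b + 1 \<noteq> 0" by simp_all
        show ?thesis unfolding \<open>n = Suc n'\<close> Suc D G rho.simps
          by (subst cancel2) (simp_all add: algebra_simps)
      qed
    qed
  qed
next
  case (Suc a)
  note iv = Suc.prems(1)
  have finV: "finite V" using iv unfolding invol_def by simp
  have rec: "real (2 * Suc a * gsum s V (Suc a) b) = real (\<Sum>x\<in>V. gsum s (V - {x, s x}) a b)"
    using recA[OF iv] by metis
  show ?case
  proof (cases n)
    case 0
    then have "V = {}" using Suc.prems finV by simp
    then have "2 * Suc a * gsum s V (Suc a) b = 0" using recA[OF iv] by simp
    then have "gsum s V (Suc a) b = 0" by simp
    then show ?thesis using 0 by simp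
  next
    case (Suc m)
    have each: "real (gsum s (V - {x, s x}) a b) = real (Dn m) * rho m a b" if x: "x \<in> V" for x
      using Suc.IH[OF card_minus2(2)[OF iv x]] card_minus2(1)[OF iv x] Suc.prems Suc by simp
    have "real (\<Sum>x\<in>V. gsum s (V - {x, s x}) a b) = (\<Sum>x\<in>V. real (Dn m) * rho m a b)"
      using each by (simp add: of_nat_sum)
    also have "\<dots> = real (2 * m + 2) * (real (Dn m) * rho m a b)"
      using Suc.prems Suc by simp
    finally have r: "real (2 * Suc a * gsum s V (Suc a) b) = real (2 * m + 2) * (real (Dn m) * rho m a b)"
      using rec by simp
    have D: "real (Dn (Suc m)) = (2 * real m + 1) * real (Dn m)"
      by (simp add: Dn_Suc algebra_simps)
    have r2: "2 * (real (gsum s V (Suc a) b) * (real a + 1)) = 2 * ((real m + 1) * (real (Dn m) * rho m a b))"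
      using r by (simp add: algebra_simps)
    then have r3: "real (gsum s V (Suc a) b) * (real a + 1) = (real m + 1) * (real (Dn m) * rho m a b)"
      by simp
    have G: "real (gsum s V (Suc a) b) = (real m + 1) * (real (Dn m) * rho m a b) / (real a + 1)"
      using r3 by (simp add: field_simps)
    have nz: "2 * real m + 1 \<noteq> 0" "real a + 1 \<noteq> 0" by simp_all
    show ?thesis unfolding Suc D G rho.simps
      by (subst cancel1) (simp_all add: algebra_simps)
  qed
qed



lemma rho_bounds: "0 \<le> rho n a b \<and> rho n a b \<le> 1 / (fact a * fact b)"
proof (induction n a b rule: rho.induct)
  case (1 n)
  then show ?case by simp
next
  case (2 a b)
  then show ?case by simp
next
  case (3 m a b)
  define c where "c = real (Suc m) / (2 * real m + 1)"
  have c: "0 \<le> c" "c \<le> 1" unfolding c_def by (simp_all add: field_simps)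
  have eq: "rho (Suc m) (Suc a) b = (c * rho m a b) / real (Suc a)"
    unfolding c_def by simp
  have "c * rho m a b \<le> 1 * (1 / (fact a * fact b))"
    using 3 c by (intro mult_mono) auto
  then have "(c * rho m a b) / real (Suc a) \<le> (1 / (fact a * fact b)) / real (Suc a)"
    by (intro divide_right_mono) auto
  also have "\<dots> = 1 / (fact (Suc a) * fact b)" by (simp add: field_simps)
  finally show ?case using eq 3 c by simp
next
  case (4 b)
  then show ?case by simp
next
  case (5 b)
  then show ?case by simp
next
  case (6 m b)
  define c where "c = real (Suc (Suc m)) * real (Suc m) / ((2 * real m + 3) * (2 * real m + 1))"
  have le: "real (Suc (Suc m)) * real (Suc m) \<le> (2 * real m + 3) * (2 * real m + 1)"
    using mult_nonneg_nonneg[of "real m" "real m"] by (simp add: algebra_simps)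
  have pos: "0 < (2 * real m + 3) * (2 * real m + 1)" by simp
  have c: "0 \<le> c" "c \<le> 1" unfolding c_def using le pos by (simp_all add: divide_le_eq_1)
  have eq: "rho (Suc (Suc m)) 0 (Suc b) = (c * rho m 0 b) / real (Suc b)"
    unfolding c_def by (simp add: field_simps)
  have "c * rho m 0 b \<le> 1 * (1 / (fact 0 * fact b))"
    using 6 c by (intro mult_mono) auto
  then have "(c * rho m 0 b) / real (Suc b) \<le> (1 / (fact 0 * fact b)) / real (Suc b)"
    by (intro divide_right_mono) auto
  also have "\<dots> = 1 / (fact 0 * fact (Suc b))" by (simp add: field_simps)
  finally show ?case using eq 6 c by simp
qed

lemma lim_c1: "(\<lambda>m. real (Suc m) / (2 * real m + 1)) \<longlonglongrightarrow> 1 / 2"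
proof -
  have L: "(\<lambda>m. inverse (2 + - inverse (real (Suc m)))) \<longlonglongrightarrow> inverse 2"
    by (intro tendsto_inverse LIMSEQ_inverse_real_of_nat_add_minus) simp
  have E: "inverse (2 + - inverse (real (Suc m))) = real (Suc m) / (2 * real m + 1)" for m
  proof -
    have "2 + - inverse (real (Suc m)) = (2 * real m + 1) / real (Suc m)"
      by (simp add: field_simps)
    then show ?thesis by simp
  qed
  show ?thesis using L unfolding E by (simp add: inverse_eq_divide)
qed

lemma lim_c2: "(\<lambda>m. real (Suc (Suc m)) * real (Suc m) / ((2 * real m + 3) * (2 * real m + 1))) \<longlonglongrightarrow> 1 / 4"
proof -
  have L: "(\<lambda>m. (real (Suc (Suc m)) / (2 * real (Suc m) + 1)) * (real (Suc m) / (2 * real m + 1))) \<longlonglongrightarrow> (1/2) * (1/2)"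
    by (intro tendsto_mult lim_c1 LIMSEQ_Suc[OF lim_c1])
  have E: "(real (Suc (Suc m)) / (2 * real (Suc m) + 1)) * (real (Suc m) / (2 * real m + 1))
     = real (Suc (Suc m)) * real (Suc m) / ((2 * real m + 3) * (2 * real m + 1))" for m
    by (simp add: field_simps)
  show ?thesis using L unfolding E by simp
qed

lemma rho_lim: "(\<lambda>n. rho n a b) \<longlonglongrightarrow> 1 / (fact a * fact b * 2 ^ a * 4 ^ b)"
proof (induction a)
  case 0
  show ?case
  proof (induction b)
    case 0
    then show ?case by simp
  next
    case (Suc b)
    have L: "(\<lambda>m. (real (Suc (Suc m)) * real (Suc m) / ((2 * real m + 3) * (2 * real m + 1))) * rho m 0 b / real (Suc b))
        \<longlonglongrightarrow> (1 / 4) * (1 / (fact 0 * fact b * 2 ^ 0 * 4 ^ b)) / real (Suc b)"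
      by (rule tendsto_divide[OF tendsto_mult[OF lim_c2 Suc] tendsto_const]) simp
    have E1: "(1 / 4) * (1 / (fact 0 * fact b * 2 ^ 0 * 4 ^ b)) / real (Suc b) = 1 / (fact 0 * fact (Suc b) * 2 ^ 0 * 4 ^ Suc b)"
      by (simp add: field_simps)
    have E2: "(\<lambda>m. (real (Suc (Suc m)) * real (Suc m) / ((2 * real m + 3) * (2 * real m + 1))) * rho m 0 b / real (Suc b))
        = (\<lambda>m. rho (Suc (Suc m)) 0 (Suc b))"
      by (simp add: field_simps)
    have "(\<lambda>m. rho (Suc (Suc m)) 0 (Suc b)) \<longlonglongrightarrow> 1 / (fact 0 * fact (Suc b) * 2 ^ 0 * 4 ^ Suc b)"
      using tendsto_cong_limit[OF L E1[symmetric]] unfolding E2 .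
    then have "(\<lambda>m. rho (Suc m) 0 (Suc b)) \<longlonglongrightarrow> 1 / (fact 0 * fact (Suc b) * 2 ^ 0 * 4 ^ Suc b)"
      by (rule LIMSEQ_imp_Suc)
    then have "(\<lambda>m. rho m 0 (Suc b)) \<longlonglongrightarrow> 1 / (fact 0 * fact (Suc b) * 2 ^ 0 * 4 ^ Suc b)"
      by (rule LIMSEQ_imp_Suc)
    then show ?case by simp
  qed
next
  case (Suc a)
  have L: "(\<lambda>m. (real (Suc m) / (2 * real m + 1)) * rho m a b / real (Suc a))
      \<longlonglongrightarrow> (1 / 2) * (1 / (fact a * fact b * 2 ^ a * 4 ^ b)) / real (Suc a)"
    by (rule tendsto_divide[OF tendsto_mult[OF lim_c1 Suc] tendsto_const]) simp
  have E1: "(1 / 2) * (1 / (fact a * fact b * 2 ^ a * 4 ^ b)) / real (Suc a) = 1 / (fact (Suc a) * fact b * 2 ^ Suc a * 4 ^ b)"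
    by (simp add: field_simps)
  have E2: "(\<lambda>m. (real (Suc m) / (2 * real m + 1)) * rho m a b / real (Suc a)) = (\<lambda>m. rho (Suc m) (Suc a) b)"
    by (simp add: field_simps)
  have "(\<lambda>m. rho (Suc m) (Suc a) b) \<longlonglongrightarrow> 1 / (fact (Suc a) * fact b * 2 ^ Suc a * 4 ^ b)"
    using tendsto_cong_limit[OF L E1[symmetric]] unfolding E2 .
  then show ?case by (rule LIMSEQ_imp_Suc)
qed

lemma tannery_fin:
  fixes f :: "nat \<Rightarrow> nat \<Rightarrow> real"
  assumes lim: "\<And>k. (\<lambda>n. f k n) \<longlonglongrightarrow> g k"
    and bound: "\<And>k n. \<bar>f k n\<bar> \<le> M k"
    and sm: "summable M"
  shows "(\<lambda>n. \<Sum>k\<le>n. f k n) \<longlonglongrightarrow> (\<Sum>k. g k)"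
proof -
  define a where "a k n = (if k \<le> n then f k n else 0)" for k n
  have lim': "(\<lambda>n. a k n) \<longlonglongrightarrow> g k" for k
  proof -
    have "eventually (\<lambda>n. f k n = a k n) sequentially"
      unfolding a_def using eventually_ge_at_top[of k] by eventually_elim simp
    then show ?thesis using lim[of k] by (rule Lim_transform_eventually[rotated]) 
  qed
  have M0: "0 \<le> M k" for k using bound[of k 0] by linarith
  have bd: "eventually (\<lambda>(k, n). norm (a k n) \<le> M k) (at_top \<times>\<^sub>F sequentially)"
    by (rule always_eventually) (auto simp: a_def bound M0)
  have T: "(\<lambda>n. suminf (\<lambda>k. a k n)) \<longlonglongrightarrow> suminf g"
    using tannerys_theorem[OF lim' bd sm] by simp
  have "suminf (\<lambda>k. a k n) = (\<Sum>k\<le>n. f k n)" for n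
    by (subst suminf_finite[of "{..n}"]) (auto simp: a_def)
  then show ?thesis using T by simp
qed



lemma abs_div_pow_le: "\<bar>x\<bar> / (fact b * (c::real) ^ b) \<le> \<bar>x\<bar> / fact b" if "c \<ge> 1"
proof (rule divide_left_mono)
  have "1 \<le> c ^ b" using that by (rule one_le_power)
  then show "fact b \<le> fact b * c ^ b"
    using mult_left_mono[of 1 "c ^ b" "fact b :: real"] by simp
  show "0 \<le> \<bar>x\<bar>" by simp
  show "0 < fact b * c ^ b * fact b" using that by (simp add: zero_less_mult_iff)
qed

lemma summable_scaled:
  fixes v :: "nat \<Rightarrow> real"
  assumes "summable (\<lambda>b. \<bar>v b\<bar> / fact b)" "c \<ge> 1"
  shows "summable (\<lambda>b. v b / (fact b * c ^ b))"
proof (rule summable_comparison_test[OF _ assms(1)])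
  show "\<exists>N. \<forall>n\<ge>N. norm (v n / (fact n * c ^ n)) \<le> \<bar>v n\<bar> / fact n"
  proof (intro exI allI impI)
    fix n :: nat
    have "norm (v n / (fact n * c ^ n)) = \<bar>v n\<bar> / (fact n * c ^ n)"
      using assms(2) by (simp add: abs_mult)
    also have "\<dots> \<le> \<bar>v n\<bar> / fact n" by (rule abs_div_pow_le[OF assms(2)])
    finally show "norm (v n / (fact n * c ^ n)) \<le> \<bar>v n\<bar> / fact n" .
  qed
qed

lemma main_limit:
  fixes u v :: "nat \<Rightarrow> real"
  assumes su: "summable (\<lambda>a. \<bar>u a\<bar> / fact a)" and sv: "summable (\<lambda>b. \<bar>v b\<bar> / fact b)"
  shows "(\<lambda>n. \<Sum>a\<le>n. \<Sum>b\<le>n. u a * v b * rho n a b) \<longlonglongrightarrow>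
           (\<Sum>a. u a / (fact a * 2 ^ a)) * (\<Sum>b. v b / (fact b * 4 ^ b))"
proof -
  define T where "T = (\<Sum>b. \<bar>v b\<bar> / fact b)"
  define W where "W = (\<Sum>b. v b / (fact b * 4 ^ b))"
  have sW: "summable (\<lambda>b. v b / (fact b * 4 ^ b))" by (rule summable_scaled[OF sv]) simp
  have sU: "summable (\<lambda>a. u a / (fact a * 2 ^ a))" by (rule summable_scaled[OF su]) simp
  have inner: "(\<lambda>n. \<Sum>b\<le>n. u a * v b * rho n a b) \<longlonglongrightarrow> u a / (fact a * 2 ^ a) * W" for a
  proof -
    have lim: "(\<lambda>n. u a * v b * rho n a b) \<longlonglongrightarrow> u a * v b * (1 / (fact a * fact b * 2 ^ a * 4 ^ b))" for b
      by (rule tendsto_mult[OF tendsto_const rho_lim])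
    have bd: "\<bar>u a * v b * rho n a b\<bar> \<le> \<bar>u a\<bar> / fact a * (\<bar>v b\<bar> / fact b)" for b n
    proof -
      have r: "0 \<le> rho n a b" "rho n a b \<le> 1 / (fact a * fact b)" using rho_bounds by auto
      have "\<bar>u a * v b * rho n a b\<bar> = (\<bar>u a\<bar> * \<bar>v b\<bar>) * rho n a b" using r by (simp add: abs_mult)
      also have "\<dots> \<le> (\<bar>u a\<bar> * \<bar>v b\<bar>) * (1 / (fact a * fact b))"
        using r by (intro mult_left_mono) auto
      also have "\<dots> = \<bar>u a\<bar> / fact a * (\<bar>v b\<bar> / fact b)" by simp
      finally show ?thesis .
    qed
    have T1: "(\<lambda>n. \<Sum>b\<le>n. u a * v b * rho n a b) \<longlonglongrightarrow> (\<Sum>b. u a * v b * (1 / (fact a * fact b * 2 ^ a * 4 ^ b)))"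
      by (rule tannery_fin[OF lim bd summable_mult[OF sv]])
    have "(\<Sum>b. u a * v b * (1 / (fact a * fact b * 2 ^ a * 4 ^ b))) = (\<Sum>b. u a / (fact a * 2 ^ a) * (v b / (fact b * 4 ^ b)))"
      by (rule arg_cong[where f=suminf]) (rule ext, simp add: field_simps)
    also have "\<dots> = u a / (fact a * 2 ^ a) * W"
      unfolding W_def by (rule suminf_mult[OF sW])
    finally have "(\<Sum>b. u a * v b * (1 / (fact a * fact b * 2 ^ a * 4 ^ b))) = u a / (fact a * 2 ^ a) * W" .
    then show ?thesis using T1 by simp
  qed
  have bd: "\<bar>\<Sum>b\<le>n. u a * v b * rho n a b\<bar> \<le> \<bar>u a\<bar> / fact a * T" for a n
  proof -
    have "\<bar>\<Sum>b\<le>n. u a * v b * rho n a b\<bar> \<le> (\<Sum>b\<le>n. \<bar>u a * v b * rho n a b\<bar>)" by (rule sum_abs)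
    also have "\<dots> \<le> (\<Sum>b\<le>n. \<bar>u a\<bar> / fact a * (\<bar>v b\<bar> / fact b))"
    proof (rule sum_mono)
      fix b
      have r: "0 \<le> rho n a b" "rho n a b \<le> 1 / (fact a * fact b)" using rho_bounds by auto
      have "\<bar>u a * v b * rho n a b\<bar> = (\<bar>u a\<bar> * \<bar>v b\<bar>) * rho n a b" using r by (simp add: abs_mult)
      also have "\<dots> \<le> (\<bar>u a\<bar> * \<bar>v b\<bar>) * (1 / (fact a * fact b))"
        using r by (intro mult_left_mono) auto
      also have "\<dots> = \<bar>u a\<bar> / fact a * (\<bar>v b\<bar> / fact b)" by simp
      finally show "\<bar>u a * v b * rho n a b\<bar> \<le> \<bar>u a\<bar> / fact a * (\<bar>v b\<bar> / fact b)" .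
    qed
    also have "\<dots> = \<bar>u a\<bar> / fact a * (\<Sum>b\<le>n. \<bar>v b\<bar> / fact b)" by (simp add: sum_distrib_left)
    also have "\<dots> \<le> \<bar>u a\<bar> / fact a * T"
      unfolding T_def by (intro mult_left_mono sum_le_suminf[OF sv]) auto
    finally show ?thesis .
  qed
  have T2: "(\<lambda>n. \<Sum>a\<le>n. \<Sum>b\<le>n. u a * v b * rho n a b) \<longlonglongrightarrow> (\<Sum>a. u a / (fact a * 2 ^ a) * W)"
    by (rule tannery_fin[OF inner bd summable_mult2[OF su]])
  have "(\<Sum>a. u a / (fact a * 2 ^ a) * W) = (\<Sum>a. u a / (fact a * 2 ^ a)) * W"
    using suminf_mult2[OF sU] by simp
  then show ?thesis using T2 unfolding W_def by simp
qed



definition uk :: "nat \<Rightarrow> nat \<Rightarrow> real" where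
  "uk k a = (if k \<le> a then (-1) ^ (a - k) * real (a choose k) else 0)"

definition d0 :: "nat \<Rightarrow> real" where
  "d0 b = (if b = 0 then 1 else 0)"

lemma summable_by_pow2:
  fixes u :: "nat \<Rightarrow> real"
  assumes "\<And>a. \<bar>u a\<bar> \<le> 2 ^ a"
  shows "summable (\<lambda>a. \<bar>u a\<bar> / fact a)"
proof (rule summable_comparison_test[OF _ summable_exp[of "2::real"]])
  show "\<exists>N. \<forall>n\<ge>N. norm (\<bar>u n\<bar> / fact n) \<le> inverse (fact n) * 2 ^ n"
  proof (intro exI allI impI)
    fix n :: nat
    have "\<bar>u n\<bar> / fact n \<le> 2 ^ n / fact n" using assms[of n] by (intro divide_right_mono) auto
    then show "norm (\<bar>u n\<bar> / fact n) \<le> inverse (fact n) * 2 ^ n" by (simp add: field_simps)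
  qed
qed

lemma uk_summable: "summable (\<lambda>a. \<bar>uk k a\<bar> / fact a)"
proof (rule summable_by_pow2)
  fix a
  have "real (a choose k) \<le> 2 ^ a"
    using binomial_le_pow2[of a k] by (metis of_nat_le_iff of_nat_numeral of_nat_power)
  then show "\<bar>uk k a\<bar> \<le> 2 ^ a" unfolding uk_def by (simp add: abs_mult)
qed

lemma d0_summable: "summable (\<lambda>b. \<bar>d0 b\<bar> / fact b)"
  by (rule summable_by_pow2) (simp add: d0_def)

lemma uk_sum:
  assumes c: "(c::real) > 0"
  shows "(\<Sum>a. uk k a / (fact a * c ^ a)) = (1 / c) ^ k / fact k * exp (- 1 / c)"
proof -
  define f where "f a = uk k a / (fact a * c ^ a)" for a
  have shift: "f (i + k) = (1 / c) ^ k / fact k * ((- 1 / c) ^ i /\<^sub>R fact i)" for i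
  proof -
    have b: "real ((i + k) choose k) = fact (i + k) / (fact k * fact i)"
      using binomial_fact[of k "i + k"] by simp
    have "f (i + k) = (-1) ^ i * (fact (i + k) / (fact k * fact i)) / (fact (i + k) * c ^ (i + k))"
      unfolding f_def uk_def b by simp
    also have "\<dots> = (1 / c) ^ k / fact k * ((- 1 / c) ^ i /\<^sub>R fact i)"
      using c by (simp add: field_simps power_add power_minus')
    finally show ?thesis .
  qed
  have "(\<lambda>i. (1 / c) ^ k / fact k * ((- 1 / c) ^ i /\<^sub>R fact i)) sums ((1 / c) ^ k / fact k * exp (- 1 / c))"
    by (rule sums_mult[OF exp_converges])
  then have "(\<lambda>i. f (i + k)) sums ((1 / c) ^ k / fact k * exp (- 1 / c))"
    unfolding shift .
  then have "f sums ((1 / c) ^ k / fact k * exp (- 1 / c) + (\<Sum>i<k. f i))"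
    by (simp add: sums_iff_shift)
  moreover have "(\<Sum>i<k. f i) = 0" unfolding f_def uk_def by simp
  ultimately have "f sums ((1 / c) ^ k / fact k * exp (- 1 / c))" by simp
  then show ?thesis unfolding f_def by (rule sums_unique[symmetric])
qed

lemma d0_sum: "(\<Sum>b. d0 b / (fact b * (c::real) ^ b)) = 1"
  by (subst suminf_finite[of "{0}"]) (auto simp: d0_def)

lemma d0_ind: "(\<Sum>b\<le>N. d0 b * real (Y choose b)) = 1"
proof -
  have "(\<Sum>b\<le>N. d0 b * real (Y choose b)) = (\<Sum>b\<in>{0}. d0 b * real (Y choose b))"
    by (rule sum.mono_neutral_right) (auto simp: d0_def)
  then show ?thesis by (simp add: d0_def)
qed

lemma uk_ind:
  assumes "X \<le> N"
  shows "(\<Sum>a\<le>N. uk k a * real (X choose a)) = (if X = k then 1 else 0)"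
proof -
  have "(\<Sum>a\<le>N. uk k a * real (X choose a)) = (\<Sum>a\<le>X. uk k a * real (X choose a))"
    by (rule sum.mono_neutral_right) (use assms in auto)
  also have "\<dots> = (if X = k then 1 else 0)"
  proof (cases "k \<le> X")
    case False
    then show ?thesis by (intro trans[OF sum.neutral]) (auto simp: uk_def)
  next
    case True
    have "(\<Sum>a\<le>X. uk k a * real (X choose a)) = (\<Sum>a\<in>{k..X}. uk k a * real (X choose a))"
      by (rule sum.mono_neutral_right) (auto simp: uk_def)
    also have "\<dots> = (\<Sum>a\<in>{0 + k..(X - k) + k}. uk k a * real (X choose a))"
      using True by simp
    also have "\<dots> = (\<Sum>i\<in>{0..X - k}. uk k (i + k) * real (X choose (i + k)))"
      by (rule sum.shift_bounds_cl_nat_ivl)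
    also have "\<dots> = (\<Sum>i\<in>{0..X - k}. real (X choose k) * ((-1) ^ i * real ((X - k) choose i)))"
    proof (rule sum.cong[OF refl])
      fix i assume "i \<in> {0..X - k}"
      then have i: "i + k \<le> X" using True by auto
      have "(X choose (i + k)) * ((i + k) choose k) = (X choose k) * ((X - k) choose i)"
        using choose_mult[of k "i + k" X] i by simp
      then have "real (X choose (i + k)) * real ((i + k) choose k) = real (X choose k) * real ((X - k) choose i)"
        by (metis of_nat_mult)
      then show "uk k (i + k) * real (X choose (i + k)) = real (X choose k) * ((-1) ^ i * real ((X - k) choose i))"
        unfolding uk_def by (simp add: algebra_simps)
    qed
    also have "\<dots> = real (X choose k) * (\<Sum>i\<le>X - k. (-1) ^ i * real ((X - k) choose i))"
      by (simp add: sum_distrib_left atLeast0AtMost)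
    also have "\<dots> = (if X = k then 1 else 0)"
    proof (cases "X = k")
      case True
      then show ?thesis by simp
    next
      case False
      then have "X - k > 0" using \<open>k \<le> X\<close> by simp
      then show ?thesis using choose_alternating_sum[of "X - k"] False by simp
    qed
    finally show ?thesis .
  qed
  finally show ?thesis .
qed



lemma invol_std: "invol {1..2*(n::nat)} (\<lambda>i. 2*n+1-i)"
  unfolding invol_def by auto presburger

lemma pm_eq: "perfect_matchings n = pmV {1..2*n}"
  unfolding perfect_matchings_def pmV_def by simp

lemma nc_eq: "num_centered n M = Xs (\<lambda>i. 2*n+1-i) M"
  unfolding num_centered_def centered_arcs_def refl_set_def Xs_def Lc_def by simp

lemma ncp_eq: "num_coupled_pairs n M = Ys (\<lambda>i. 2*n+1-i) M"
proof -
  have "{{a, refl_set n a} | a. a \<in> coupled_arcs n M} = (\<lambda>a. {a, (\<lambda>i. 2*n+1-i) ` a}) ` Cc (\<lambda>i. 2*n+1-i) M"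
    unfolding coupled_arcs_def Cc_def refl_set_def by blast
  then show ?thesis unfolding num_coupled_pairs_def Ys_def by simp
qed

lemma X_le:
  assumes "M \<in> pmV {1..2*(n::nat)}"
  shows "Xs (\<lambda>i. 2*n+1-i) M \<le> n"
proof -
  have "card {x \<in> {1..2*n}. {x, 2*n+1-x} \<in> M} \<le> card {1..2*n}"
    by (rule card_mono) auto
  then show ?thesis using card_loops[OF invol_std assms] by simp
qed

lemma Y_le:
  assumes "M \<in> pmV {1..2*(n::nat)}"
  shows "Ys (\<lambda>i. 2*n+1-i) M \<le> n"
proof -
  let ?s = "\<lambda>i. 2*n+1-i"
  have "card {x \<in> {1..2*n}. \<exists>y \<in> {1..2*n} - {x, ?s x}. {x, y} \<in> M \<and> {?s x, ?s y} \<in> M} \<le> card {1..2*n}"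
    by (rule card_mono) auto
  then show ?thesis using card_coupled[OF invol_std assms] by simp
qed

lemma prob_formula:
  fixes u v :: "nat \<Rightarrow> real"
  assumes ind: "\<And>M. M \<in> pmV {1..2*(n::nat)} \<Longrightarrow> (if P M then 1 else 0) =
     (\<Sum>a\<le>n. u a * real (Xs (\<lambda>i. 2*n+1-i) M choose a)) * (\<Sum>b\<le>n. v b * real (Ys (\<lambda>i. 2*n+1-i) M choose b))"
  shows "pm_prob n P = (\<Sum>a\<le>n. \<Sum>b\<le>n. u a * v b * rho n a b)"
proof -
  define s where "s = (\<lambda>i::nat. 2*n+1-i)"
  define V where "V = {1..2*n}"
  define PM where "PM = pmV V"
  have iv: "invol V s" unfolding V_def s_def by (rule invol_std)
  have finPM: "finite PM" unfolding PM_def using iv pmV_finite unfolding invol_def by blast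
  have cV: "card V = 2 * n" unfolding V_def by simp
  have ind': "(if P M then 1 else 0) = (\<Sum>a\<le>n. \<Sum>b\<le>n. u a * v b * (real (Xs s M choose a) * real (Ys s M choose b)))"
    if "M \<in> PM" for M
    using ind[of M] that unfolding PM_def V_def s_def by (simp add: sum_product mult_ac)
  have "real (card {M \<in> PM. P M}) = (\<Sum>M\<in>{M \<in> PM. P M}. 1)" by simp
  also have "\<dots> = (\<Sum>M\<in>PM. if P M then 1 else 0)" by (rule sum.inter_filter[OF finPM])
  also have "\<dots> = (\<Sum>M\<in>PM. \<Sum>a\<le>n. \<Sum>b\<le>n. u a * v b * (real (Xs s M choose a) * real (Ys s M choose b)))"
    using ind' by (rule sum.cong[OF refl])
  also have "\<dots> = (\<Sum>a\<le>n. \<Sum>M\<in>PM. \<Sum>b\<le>n. u a * v b * (real (Xs s M choose a) * real (Ys s M choose b)))"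
    by (rule sum.swap)
  also have "\<dots> = (\<Sum>a\<le>n. \<Sum>b\<le>n. \<Sum>M\<in>PM. u a * v b * (real (Xs s M choose a) * real (Ys s M choose b)))"
    by (rule sum.cong[OF refl]) (rule sum.swap)
  also have "\<dots> = (\<Sum>a\<le>n. \<Sum>b\<le>n. u a * v b * real (gsum s V a b))"
    unfolding gsum_def PM_def by (simp add: sum_distrib_left)
  also have "\<dots> = (\<Sum>a\<le>n. \<Sum>b\<le>n. real (Dn n) * (u a * v b * rho n a b))"
    using gsum_rho[OF iv cV] by (simp add: mult_ac)
  also have "\<dots> = real (Dn n) * (\<Sum>a\<le>n. \<Sum>b\<le>n. u a * v b * rho n a b)"
    by (simp add: sum_distrib_left)
  finally have num: "real (card {M \<in> PM. P M}) = real (Dn n) * (\<Sum>a\<le>n. \<Sum>b\<le>n. u a * v b * rho n a b)" .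
  have den: "card PM = Dn n" unfolding PM_def using card_pmV[of V n] iv cV unfolding invol_def by simp
  have "Dn n > 0" by (rule Dn_pos)
  then show ?thesis
    unfolding pm_prob_def pm_eq PM_def[symmetric, unfolded V_def] using num den
    unfolding PM_def V_def by simp
qed

lemma lim_general:
  fixes u v :: "nat \<Rightarrow> real"
  assumes ind: "\<And>n M. M \<in> pmV {1..2*(n::nat)} \<Longrightarrow> (if P n M then 1 else 0) =
     (\<Sum>a\<le>n. u a * real (Xs (\<lambda>i. 2*n+1-i) M choose a)) * (\<Sum>b\<le>n. v b * real (Ys (\<lambda>i. 2*n+1-i) M choose b))"
    and su: "summable (\<lambda>a. \<bar>u a\<bar> / fact a)" and sv: "summable (\<lambda>b. \<bar>v b\<bar> / fact b)"
  shows "(\<lambda>n. pm_prob n (P n)) \<longlonglongrightarrow> (\<Sum>a. u a / (fact a * 2 ^ a)) * (\<Sum>b. v b / (fact b * 4 ^ b))"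
proof -
  have "(\<lambda>n. pm_prob n (P n)) = (\<lambda>n. \<Sum>a\<le>n. \<Sum>b\<le>n. u a * v b * rho n a b)"
    by (rule ext, rule prob_formula, rule ind)
  then show ?thesis using main_limit[OF su sv] by simp
qed



theorem corollary5p2:
  fixes k l :: nat
  shows "((\<lambda>n. pm_prob n (\<lambda>M. num_centered n M = k))
           \<longlonglongrightarrow> exp (-1/2) / (2 ^ k * fact k)) \<and>
         ((\<lambda>n. pm_prob n (\<lambda>M. num_coupled_pairs n M = l))
           \<longlonglongrightarrow> exp (-1/4) / (4 ^ l * fact l)) \<and>
         ((\<lambda>n. pm_prob n (\<lambda>M. num_centered n M = k \<and> num_coupled_pairs n M = l))
           \<longlonglongrightarrow> exp (-3/4) / (2 ^ k * 4 ^ l * fact k * fact l))"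
proof (intro conjI)
  have Sk: "(\<Sum>a. uk k a / (fact a * 2 ^ a)) = (1 / 2) ^ k / fact k * exp (- 1 / 2)"
    by (rule uk_sum) simp
  have Sl: "(\<Sum>b. uk l b / (fact b * 4 ^ b)) = (1 / 4) ^ l / fact l * exp (- 1 / 4)"
    by (rule uk_sum) simp
  have D2: "(\<Sum>a. d0 a / (fact a * 2 ^ a)) = 1" by (rule d0_sum)
  have D4: "(\<Sum>b. d0 b / (fact b * 4 ^ b)) = 1" by (rule d0_sum)
  have L1: "(\<lambda>n. pm_prob n (\<lambda>M. num_centered n M = k)) \<longlonglongrightarrow>
      (\<Sum>a. uk k a / (fact a * 2 ^ a)) * (\<Sum>b. d0 b / (fact b * 4 ^ b))"
  proof (rule lim_general[where P="\<lambda>n M. num_centered n M = k", OF _ uk_summable d0_summable])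
    fix n M assume M: "M \<in> pmV {1..2*(n::nat)}"
    show "(if num_centered n M = k then 1 else 0) =
      (\<Sum>a\<le>n. uk k a * real (Xs (\<lambda>i. 2*n+1-i) M choose a)) * (\<Sum>b\<le>n. d0 b * real (Ys (\<lambda>i. 2*n+1-i) M choose b))"
      unfolding nc_eq uk_ind[OF X_le[OF M]] d0_ind by simp
  qed
  then show "(\<lambda>n. pm_prob n (\<lambda>M. num_centered n M = k)) \<longlonglongrightarrow> exp (-1/2) / (2 ^ k * fact k)"
    unfolding Sk D4 by (simp add: field_simps power_one_over)
  have L2: "(\<lambda>n. pm_prob n (\<lambda>M. num_coupled_pairs n M = l)) \<longlonglongrightarrow>
      (\<Sum>a. d0 a / (fact a * 2 ^ a)) * (\<Sum>b. uk l b / (fact b * 4 ^ b))"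
  proof (rule lim_general[where P="\<lambda>n M. num_coupled_pairs n M = l", OF _ d0_summable uk_summable])
    fix n M assume M: "M \<in> pmV {1..2*(n::nat)}"
    show "(if num_coupled_pairs n M = l then 1 else 0) =
      (\<Sum>a\<le>n. d0 a * real (Xs (\<lambda>i. 2*n+1-i) M choose a)) * (\<Sum>b\<le>n. uk l b * real (Ys (\<lambda>i. 2*n+1-i) M choose b))"
      unfolding ncp_eq uk_ind[OF Y_le[OF M]] d0_ind by simp
  qed
  then show "(\<lambda>n. pm_prob n (\<lambda>M. num_coupled_pairs n M = l)) \<longlonglongrightarrow> exp (-1/4) / (4 ^ l * fact l)"
    unfolding Sl D2 by (simp add: field_simps power_one_over)
  have L3: "(\<lambda>n. pm_prob n (\<lambda>M. num_centered n M = k \<and> num_coupled_pairs n M = l)) \<longlonglongrightarrow>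
      (\<Sum>a. uk k a / (fact a * 2 ^ a)) * (\<Sum>b. uk l b / (fact b * 4 ^ b))"
  proof (rule lim_general[where P="\<lambda>n M. num_centered n M = k \<and> num_coupled_pairs n M = l", OF _ uk_summable uk_summable])
    fix n M assume M: "M \<in> pmV {1..2*(n::nat)}"
    show "(if num_centered n M = k \<and> num_coupled_pairs n M = l then 1 else 0) =
      (\<Sum>a\<le>n. uk k a * real (Xs (\<lambda>i. 2*n+1-i) M choose a)) * (\<Sum>b\<le>n. uk l b * real (Ys (\<lambda>i. 2*n+1-i) M choose b))"
      unfolding nc_eq ncp_eq uk_ind[OF X_le[OF M]] uk_ind[OF Y_le[OF M]] by simp
  qed
  have E: "exp (- 1 / 2) * exp (- 1 / 4) = exp (-3/4 :: real)"
    by (simp add: exp_add[symmetric])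
  have V: "(1 / 2) ^ k / fact k * exp (- 1 / 2) * ((1 / 4) ^ l / fact l * exp (- 1 / 4))
      = exp (-3/4) / (2 ^ k * 4 ^ l * fact k * fact l :: real)"
    using E[symmetric] by (simp add: field_simps power_one_over)
  show "(\<lambda>n. pm_prob n (\<lambda>M. num_centered n M = k \<and> num_coupled_pairs n M = l))
           \<longlonglongrightarrow> exp (-3/4) / (2 ^ k * 4 ^ l * fact k * fact l)"
    using L3 unfolding Sk Sl V .
qed

end
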